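(* If $k$ is even, then every matching of $X_{2k}$ has at least one disjoint compatible matching; i.e. $\mathbf{DCM}_k$ has no isolated vertices.
   Context: Let $k\ge 1$ and let $X_{2k}=\{P_1,\dots,P_{2k}\}$ be $2k$ points in convex position in the plane, labeled in clockwise cyclic order. A matching of $X_{2k}$ means a set of $k$ pairwise non-crossing straight segments (edges) with endpoints in $X_{2k}$ covering every point exactly once; its size is $k$. Two matchings $M,M'$ of $X_{2k}$ are disjoint compatible if they have no common edge and no edge of $M$ crosses an edge of $M'$. $\mathbf{DCM}_k$ is the graph whose vertices are the matchings of $X_{2k}$, two being adjacent iff they are disjoint compatible. *)

theory Defs
  imports Main
begin

text \<open>Points of X_2k in convex position are identified with their labels
  0, 1, ..., 2k-1 (label i stands for P_(i+1)), in cyclic clockwise order.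
  A straight segment between two points is the 2-element set of its endpoints.
  For points in convex position, two segments with four distinct endpoints
  cross iff their endpoints interleave in the cyclic order; segments sharing an
  endpoint do not cross.\<close>

definition crosses :: "nat set \<Rightarrow> nat set \<Rightarrow> bool" where
  "crosses e f \<longleftrightarrow> (\<exists>a b c d. e = {a, b} \<and> f = {c, d} \<and> a < c \<and> c < b \<and> b < d)"

definition noncrossing :: "nat set \<Rightarrow> nat set \<Rightarrow> bool" where
  "noncrossing e f \<longleftrightarrow> \<not> crosses e f \<and> \<not> crosses f e"

definition is_matching :: "nat \<Rightarrow> nat set set \<Rightarrow> bool" where
  "is_matching k M \<longleftrightarrow>
     (\<forall>e\<in>M. e \<subseteq> {0..<2*k} \<and> card e = 2) \<and>
     (\<forall>p\<in>{0..<2*k}. \<exists>!e. e \<in> M \<and> p \<in> e) \<and>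
     (\<forall>e\<in>M. \<forall>f\<in>M. noncrossing e f)"

definition disjoint_compatible :: "nat set set \<Rightarrow> nat set set \<Rightarrow> bool" where
  "disjoint_compatible M M' \<longleftrightarrow> M \<inter> M' = {} \<and> (\<forall>e\<in>M. \<forall>f\<in>M'. noncrossing e f)"

definition DCM_adj :: "nat \<Rightarrow> nat set set \<Rightarrow> nat set set \<Rightarrow> bool" where
  "DCM_adj k M M' \<longleftrightarrow> is_matching k M \<and> is_matching k M' \<and> disjoint_compatible M M'"

end

theory Submission
  imports Defs
begin


lemma crosses_iff:
  assumes "x < (y::nat)" "u < v"
  shows "crosses {x,y} {u,v} \<longleftrightarrow> x < u \<and> u < y \<and> y < v"
proof
  assume "crosses {x,y} {u,v}"
  then obtain a b c d where h: "{x,y} = {a,b}" "{u,v} = {c,d}" "a<c" "c<b" "b<d"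
    unfolding crosses_def by blast
  from h(1) h(3-5) assms have "a = x \<and> b = y" by (auto simp: doubleton_eq_iff)
  moreover from h(2) h(3-5) assms have "c = u \<and> d = v" by (auto simp: doubleton_eq_iff)
  ultimately show "x < u \<and> u < y \<and> y < v" using h by auto
next
  assume "x < u \<and> u < y \<and> y < v"
  then show "crosses {x,y} {u,v}" unfolding crosses_def by blast
qed

lemma sep:
  assumes "e \<subseteq> R" "f \<subseteq> S - R" "\<forall>x\<in>S. lo \<le> x \<and> x \<le> hi \<longrightarrow> x \<in> R" "R \<subseteq> {lo..(hi::nat)}"
  shows "noncrossing e f"
  using assms unfolding noncrossing_def crosses_def
  by (smt (verit, best) Diff_iff atLeastAtMost_iff insert_subset less_imp_le_nat order.trans subsetD)



definition pm :: "nat set \<Rightarrow> nat set set \<Rightarrow> bool" where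
  "pm S M \<longleftrightarrow> (\<forall>e\<in>M. e \<subseteq> S \<and> card e = 2) \<and> (\<forall>p\<in>S. \<exists>!e. e \<in> M \<and> p \<in> e) \<and>
     (\<forall>e\<in>M. \<forall>f\<in>M. noncrossing e f)"

lemma nc_sym: "noncrossing e f = noncrossing f e"
  unfolding noncrossing_def by auto

lemma step:
  assumes pm: "pm S M"
    and RS: "R \<subseteq> S" and Ref: "R = e \<union> f" and Rgh: "R = g \<union> h"
    and eM: "e \<in> M" and fM: "f \<in> M" and ef: "e \<noteq> f"
    and gh: "g \<inter> h = {}" and cg: "card g = 2" and ch: "card h = 2"
    and gne: "g \<noteq> e" "g \<noteq> f" and hne: "h \<noteq> e" "h \<noteq> f"
    and blk: "\<forall>x\<in>S. lo \<le> x \<and> x \<le> hi \<longrightarrow> x \<in> R" "R \<subseteq> {lo..hi}"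
    and NC: "\<forall>u\<in>{g,h}. \<forall>v\<in>{e,f,g,h}. noncrossing u v"
    and IH: "\<And>M0. pm (S - R) M0 \<Longrightarrow> \<exists>M0'. pm (S - R) M0' \<and> disjoint_compatible M0 M0'"
  shows "\<exists>M'. pm S M' \<and> disjoint_compatible M M'"
proof -
  have Medge: "\<forall>x\<in>M. x \<subseteq> S \<and> card x = 2" and Muniq: "\<forall>p\<in>S. \<exists>!x. x \<in> M \<and> p \<in> x"
    and Mnc: "\<forall>x\<in>M. \<forall>y\<in>M. noncrossing x y" using pm unfolding pm_def by auto
  have other: "x \<inter> R = {}" if "x \<in> M" "x \<noteq> e" "x \<noteq> f" for x
  proof (rule ccontr)
    assume "x \<inter> R \<noteq> {}"
    then obtain p where p: "p \<in> x" "p \<in> R" by auto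
    then have pS: "p \<in> S" using RS by auto
    show False
    proof (cases "p \<in> e")
      case True
      then show False using Muniq pS p that eM by blast
    next
      case False
      then have "p \<in> f" using p Ref by auto
      then show False using Muniq pS p that fM by blast
    qed
  qed
  define M0 where "M0 = M - {e, f}"
  have "pm (S - R) M0"
    unfolding pm_def
  proof (intro conjI ballI)
    fix x assume "x \<in> M0"
    then show "x \<subseteq> S - R" using other Medge unfolding M0_def by auto
  next
    fix x assume "x \<in> M0"
    then show "card x = 2" using other Medge unfolding M0_def by auto
  next
    fix p assume p: "p \<in> S - R"
    then obtain x where x: "x \<in> M" "p \<in> x" "\<forall>y. y \<in> M \<and> p \<in> y \<longrightarrow> y = x" using Muniq by blast
    have "x \<noteq> e" using x(2) p Ref by blast
    moreover have "x \<noteq> f" using x(2) p Ref by blast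
    ultimately have xM0: "x \<in> M0" using x(1) unfolding M0_def by simp
    show "\<exists>!x. x \<in> M0 \<and> p \<in> x"
    proof (rule ex1I[of _ x])
      show "x \<in> M0 \<and> p \<in> x" using xM0 x(2) by simp
    next
      fix y assume "y \<in> M0 \<and> p \<in> y"
      then show "y = x" using x(3) unfolding M0_def by simp
    qed
  next
    fix x y assume "x \<in> M0" "y \<in> M0"
    then show "noncrossing x y" using Mnc unfolding M0_def by auto
  qed
  then obtain M0' where M0': "pm (S - R) M0'" "disjoint_compatible M0 M0'" using IH by blast
  have M0'e: "\<forall>x\<in>M0'. x \<subseteq> S - R \<and> card x = 2" and M0'u: "\<forall>p\<in>S - R. \<exists>!x. x \<in> M0' \<and> p \<in> x"
    and M0'n: "\<forall>x\<in>M0'. \<forall>y\<in>M0'. noncrossing x y" using M0'(1) unfolding pm_def by auto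
  have M0'd: "M0 \<inter> M0' = {}" and M0'c: "\<forall>x\<in>M0. \<forall>y\<in>M0'. noncrossing x y"
    using M0'(2) unfolding disjoint_compatible_def by auto
  have gR: "g \<subseteq> R" and hR: "h \<subseteq> R" using Rgh by auto
  have gnemp: "g \<noteq> {}" and hnemp: "h \<noteq> {}" using cg ch by auto
  define M' where "M' = insert g (insert h M0')"
  have sepR: "noncrossing u v" if "u \<subseteq> R" "v \<in> M0'" for u v
    using sep[OF that(1) _ blk] M0'e that(2) by blast
  have pmM': "pm S M'"
    unfolding pm_def
  proof (intro conjI ballI)
    fix x assume "x \<in> M'"
    then show "x \<subseteq> S" using M0'e gR hR RS cg ch unfolding M'_def by auto
  next
    fix x assume "x \<in> M'"
    then show "card x = 2" using M0'e gR hR RS cg ch unfolding M'_def by auto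
  next
    fix p assume pS: "p \<in> S"
    show "\<exists>!x. x \<in> M' \<and> p \<in> x"
    proof (cases "p \<in> R")
      case True
      have notin: "\<forall>x\<in>M0'. p \<notin> x" using M0'e True by auto
      show ?thesis
      proof (cases "p \<in> g")
        case True
        then have "p \<notin> h" using gh by auto
        then show ?thesis using True notin unfolding M'_def by blast
      next
        case False
        then have "p \<in> h" using \<open>p \<in> R\<close> Rgh by auto
        then show ?thesis using False notin unfolding M'_def by blast
      qed
    next
      case False
      then have "p \<notin> g" "p \<notin> h" using gR hR by auto
      moreover have "\<exists>!x. x \<in> M0' \<and> p \<in> x" using M0'u pS False by auto
      ultimately show ?thesis unfolding M'_def by blast
    qed
  next
    fix x y assume xy: "x \<in> M'" "y \<in> M'"
    show "noncrossing x y"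
    proof -
      { fix u v assume u: "u \<in> {g,h}" and v: "v \<in> M'"
        have "noncrossing u v"
        proof (cases "v \<in> M0'")
          case True
          then show ?thesis using sepR u gR hR by auto
        next
          case False
          then have "v \<in> {g,h}" using v unfolding M'_def by auto
          then show ?thesis using NC u by auto
        qed }
      note A = this
      show ?thesis
      proof (cases "x \<in> {g,h}")
        case True then show ?thesis using A xy by auto
      next
        case False
        then have x0: "x \<in> M0'" using xy unfolding M'_def by auto
        show ?thesis
        proof (cases "y \<in> {g,h}")
          case True then show ?thesis using A[of y x] xy nc_sym by auto
        next
          case False
          then have "y \<in> M0'" using xy unfolding M'_def by auto
          then show ?thesis using x0 M0'n by auto
        qed
      qed
    qed
  qed
  have gnM: "g \<notin> M" using other gne gnemp gR by blast
  have hnM: "h \<notin> M" using other hne hnemp hR by blast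
  have dis: "M \<inter> M' = {}"
  proof -
    { fix x assume x: "x \<in> M" "x \<in> M0'"
      have xsub: "x \<subseteq> S - R" "x \<noteq> {}" using M0'e x(2) by auto
      have "x \<noteq> e" "x \<noteq> f" using xsub Ref by auto
      then have "x \<in> M0" using x unfolding M0_def by auto
      then have False using M0'd x by auto }
    then show ?thesis using gnM hnM unfolding M'_def by auto
  qed
  have comp: "\<forall>x\<in>M. \<forall>y\<in>M'. noncrossing x y"
  proof (intro ballI)
    fix x y assume x: "x \<in> M" and y: "y \<in> M'"
    show "noncrossing x y"
    proof (cases "y \<in> M0'")
      case True
      show ?thesis
      proof (cases "x = e \<or> x = f")
        case True
        then have "x \<subseteq> R" using Ref by auto
        then show ?thesis using sepR \<open>y \<in> M0'\<close> by auto
      next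
        case False
        then have "x \<in> M0" using x unfolding M0_def by auto
        then show ?thesis using M0'c True by auto
      qed
    next
      case False
      then have yg: "y \<in> {g,h}" using y unfolding M'_def by auto
      show ?thesis
      proof (cases "x = e \<or> x = f")
        case True
        then show ?thesis using NC yg nc_sym by auto
      next
        case False
        then have "x \<inter> R = {}" using other x by auto
        then have "x \<subseteq> S - R" using Medge x by auto
        then show ?thesis using sep[OF _ _ blk, of y x] yg gR hR nc_sym by auto
      qed
    qed
  qed
  show ?thesis using pmM' dis comp unfolding disjoint_compatible_def by blast
qed



lemma pm_edge: "pm S M \<Longrightarrow> x \<in> M \<Longrightarrow> \<exists>a b. a < b \<and> x = {a,b}"
proof -
  assume "pm S M" "x \<in> M"
  then have "card x = 2" unfolding pm_def by auto
  then obtain a b where "x = {a,b}" "a \<noteq> b" by (auto simp: card_2_iff)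
  then show ?thesis
  proof (cases "a < b")
    case True then show ?thesis using \<open>x = {a,b}\<close> by blast
  next
    case False
    then have "b < a" using \<open>a \<noteq> b\<close> by simp
    moreover have "x = {b,a}" using \<open>x = {a,b}\<close> by (simp add: insert_commute)
    ultimately show ?thesis by blast
  qed
qed

lemma pm_mem: "pm S M \<Longrightarrow> {p,q} \<in> M \<Longrightarrow> p \<in> S \<and> q \<in> S"
proof -
  assume a: "pm S M" "{p,q} \<in> M"
  have "\<forall>e\<in>M. e \<subseteq> S" using a(1) unfolding pm_def by simp
  then have "{p,q} \<subseteq> S" using a(2) by blast
  then show ?thesis by simp
qed

lemma pm_partner: "pm S M \<Longrightarrow> p \<in> S \<Longrightarrow> \<exists>q. q \<noteq> p \<and> {p,q} \<in> M"
proof -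
  assume a: "pm S M" "p \<in> S"
  then obtain x where x: "x \<in> M" "p \<in> x" unfolding pm_def by blast
  then obtain u v where "u < v" "x = {u,v}" using pm_edge a by blast
  show ?thesis
  proof (cases "p = u")
    case True then show ?thesis using \<open>u < v\<close> \<open>x = {u,v}\<close> x(1) by auto
  next
    case False
    then have "p = v" using x(2) \<open>x = {u,v}\<close> by simp
    moreover have "{v,u} \<in> M" using x(1) \<open>x = {u,v}\<close> by (simp add: insert_commute)
    ultimately show ?thesis using \<open>u < v\<close> by auto
  qed
qed

lemma pm_uniq: "pm S M \<Longrightarrow> {p,q} \<in> M \<Longrightarrow> {p,q'} \<in> M \<Longrightarrow> q = q'"
proof -
  assume a: "pm S M" "{p,q} \<in> M" "{p,q'} \<in> M"
  then have "p \<in> S" using pm_mem by blast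
  moreover have "\<forall>p\<in>S. \<exists>!x. x \<in> M \<and> p \<in> x" using a(1) unfolding pm_def by simp
  ultimately have "\<exists>!x. x \<in> M \<and> p \<in> x" by simp
  then obtain x where "\<forall>y. y \<in> M \<and> p \<in> y \<longrightarrow> y = x" by (elim ex1E) simp
  then have "{p,q} = x" "{p,q'} = x" using a(2,3) by simp_all
  then have "{p,q} = {p,q'}" by simp
  then show ?thesis by (auto simp: doubleton_eq_iff)
qed

lemma pm_nocross: "pm S M \<Longrightarrow> {a,b} \<in> M \<Longrightarrow> {c,d} \<in> M \<Longrightarrow> a < c \<Longrightarrow> c < b \<Longrightarrow> b < d \<Longrightarrow> False"
proof -
  assume a: "pm S M" "{a,b} \<in> M" "{c,d} \<in> M" "a < c" "c < b" "b < d"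
  then have "noncrossing {a,b} {c,d}" unfolding pm_def by blast
  moreover have "crosses {a,b} {c,d}" unfolding crosses_def using a by blast
  ultimately show False unfolding noncrossing_def by blast
qed

lemma inside:
  assumes pm: "pm S M" and ab: "{a,b} \<in> M" "a < b" and x: "a < x" "x < b" and xy: "{x,y} \<in> M"
  shows "a < y \<and> y < b"
proof -
  have "y \<noteq> a"
  proof
    assume "y = a"
    then have "{a,x} \<in> M" using xy by (simp add: insert_commute)
    then show False using pm_uniq[OF pm ab(1)] x by auto
  qed
  moreover have "y \<noteq> b"
  proof
    assume "y = b"
    then have "{b,x} \<in> M" using xy by (simp add: insert_commute)
    moreover have "{b,a} \<in> M" using ab by (simp add: insert_commute)
    ultimately show False using pm_uniq[OF pm] x by fastforce
  qed
  moreover have "\<not> y < a"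
  proof
    assume "y < a"
    moreover have "{y,x} \<in> M" using xy by (simp add: insert_commute)
    ultimately show False using pm_nocross[OF pm _ ab(1)] x by blast
  qed
  moreover have "\<not> b < y" using pm_nocross[OF pm ab(1) xy] x by blast
  ultimately show ?thesis by auto
qed

lemma two_leaves:
  assumes pm: "pm S M" and fin: "finite T" and TS: "T \<subseteq> S"
    and closed: "\<And>x y. x \<in> T \<Longrightarrow> {x,y} \<in> M \<Longrightarrow> y \<in> T"
    and leaves: "\<And>x y. x \<in> T \<Longrightarrow> {x,y} \<in> M \<Longrightarrow> x < y \<Longrightarrow> {z\<in>S. x < z \<and> z < y} = {}"
    and conv: "\<And>z. z \<in> S \<Longrightarrow> Min T \<le> z \<Longrightarrow> z \<le> Max T \<Longrightarrow> z \<in> T"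
    and ne: "T \<noteq> {}"
    and c: "c = Min T" and cd: "{c,d} \<in> M" and ne2: "T - {c,d} \<noteq> {}"
  shows "\<exists>r1 r2 r3 r4. r1 < r2 \<and> r2 < r3 \<and> r3 < r4 \<and> {x\<in>S. r1 \<le> x \<and> x \<le> r4} = {r1,r2,r3,r4}
          \<and> (({r1,r2} \<in> M \<and> {r3,r4} \<in> M) \<or> ({r1,r4} \<in> M \<and> {r2,r3} \<in> M))"
proof -
  have cT: "c \<in> T" using c fin ne by simp
  have dT: "d \<in> T" using closed cT cd by blast
  have "d \<noteq> c" using pm_edge[OF pm cd] by (auto simp: doubleton_eq_iff)
  then have cltd: "c < d" using dT c fin by (metis Min_le le_neq_implies_less)
  have Icd: "{z\<in>S. c < z \<and> z < d} = {}" using leaves cT cd cltd by blast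
  define T2 where "T2 = T - {c,d}"
  define c' where "c' = Min T2"
  have fin2: "finite T2" using fin T2_def by simp
  have c'T2: "c' \<in> T2" unfolding c'_def by (rule Min_in[OF fin2]) (use ne2 in \<open>simp add: T2_def\<close>)
  obtain d' where d': "d' \<noteq> c'" "{c',d'} \<in> M" using pm_partner[OF pm] c'T2 TS T2_def by blast
  have d'T: "d' \<in> T" using closed c'T2 d' T2_def by blast
  have "d' \<noteq> c"
  proof
    assume "d' = c"
    then have "{c,c'} \<in> M" using d' by (simp add: insert_commute)
    then have "c' = d" using pm_uniq[OF pm cd] by auto
    then show False using c'T2 T2_def by auto
  qed
  moreover have "d' \<noteq> d"
  proof
    assume "d' = d"
    then have "{d,c'} \<in> M" using d' by (simp add: insert_commute)
    moreover have "{d,c} \<in> M" using cd by (simp add: insert_commute)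
    ultimately have "c' = c" using pm_uniq[OF pm] by blast
    then show False using c'T2 T2_def by auto
  qed
  ultimately have d'T2: "d' \<in> T2" using d'T T2_def by auto
  have c'ltd': "c' < d'" using d' d'T2 c'_def fin2 by (metis Min_le le_neq_implies_less)
  have Ic'd': "{z\<in>S. c' < z \<and> z < d'} = {}" using leaves c'T2 T2_def d' c'ltd' by blast
  have c'S: "c' \<in> S" using c'T2 T2_def TS by auto
  have "c \<le> c'" using c c'T2 T2_def fin by auto
  moreover have "c' \<noteq> c" "c' \<noteq> d" using c'T2 T2_def by auto
  ultimately have dltc': "d < c'" using Icd c'S by (metis (mono_tags, lifting) empty_iff le_neq_implies_less linorder_neqE_nat mem_Collect_eq)
  have blk: "{x\<in>S. c \<le> x \<and> x \<le> d'} = {c,d,c',d'}"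
  proof
    show "{x\<in>S. c \<le> x \<and> x \<le> d'} \<subseteq> {c,d,c',d'}"
    proof
      fix x assume x: "x \<in> {x\<in>S. c \<le> x \<and> x \<le> d'}"
      have "d' \<le> Max T" using d'T fin by simp
      then have xT: "x \<in> T" using conv x c by auto
      show "x \<in> {c,d,c',d'}"
      proof (rule ccontr)
        assume nx: "x \<notin> {c,d,c',d'}"
        then have "x \<in> T2" using xT T2_def by auto
        then have "c' \<le> x" using c'_def fin2 by simp
        then have "c' < x" using nx by auto
        moreover have "x < d'" using x nx by auto
        ultimately show False using Ic'd' x by blast
      qed
    qed
  next
    show "{c,d,c',d'} \<subseteq> {x\<in>S. c \<le> x \<and> x \<le> d'}"
      using cT dT c'T2 d'T2 T2_def TS cltd dltc' c'ltd' by auto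
  qed
  show ?thesis using cltd dltc' c'ltd' blk cd d' by blast
qed



lemma block:
  assumes pm: "pm S M" and fin: "finite S" and c4: "card S \<ge> 4"
  shows "\<exists>r1 r2 r3 r4. r1 < r2 \<and> r2 < r3 \<and> r3 < r4 \<and> {x\<in>S. r1 \<le> x \<and> x \<le> r4} = {r1,r2,r3,r4}
          \<and> (({r1,r2} \<in> M \<and> {r3,r4} \<in> M) \<or> ({r1,r4} \<in> M \<and> {r2,r3} \<in> M))"
proof (cases "\<exists>a b. a < b \<and> {a,b} \<in> M \<and> {z\<in>S. a < z \<and> z < b} \<noteq> {}")
  case False
  have Sne: "S \<noteq> {}" using c4 by auto
  define c where "c = Min S"
  have cS: "c \<in> S" using c_def fin Sne by simp
  obtain d where d: "d \<noteq> c" "{c,d} \<in> M" using pm_partner[OF pm cS] by blast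
  have "S - {c,d} \<noteq> {}"
  proof
    assume "S - {c,d} = {}"
    then have "S \<subseteq> {c,d}" by auto
    then have "card S \<le> card {c,d}" by (simp add: card_mono)
    also have "\<dots> \<le> 2" by (simp add: card_insert_le_m1)
    finally show False using c4 by simp
  qed
  show ?thesis
  proof (rule two_leaves[OF pm fin _ _ _ _ Sne c_def d(2)])
    show "S \<subseteq> S" by simp
    show "\<And>x y. x \<in> S \<Longrightarrow> {x, y} \<in> M \<Longrightarrow> y \<in> S" using pm_mem[OF pm] by blast
    show "\<And>x y. x \<in> S \<Longrightarrow> {x, y} \<in> M \<Longrightarrow> x < y \<Longrightarrow> {z \<in> S. x < z \<and> z < y} = {}"
      using False by blast
    show "\<And>z. z \<in> S \<Longrightarrow> Min S \<le> z \<Longrightarrow> z \<le> Max S \<Longrightarrow> z \<in> S" by simp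
    show "S - {c, d} \<noteq> {}" by fact
  qed
next
  case True
  define P where "P n \<longleftrightarrow> (\<exists>a b. a < b \<and> {a,b} \<in> M \<and> {z\<in>S. a < z \<and> z < b} \<noteq> {}
      \<and> card {z\<in>S. a < z \<and> z < b} = n)" for n
  have "\<exists>n. P n" using True unfolding P_def by blast
  then obtain n where Pn: "P n" and minn: "\<forall>m<n. \<not> P m" using exists_least_iff[of P] by blast
  then obtain a b where ab: "a < b" "{a,b} \<in> M" and Ine: "{z\<in>S. a < z \<and> z < b} \<noteq> {}"
    and cardI: "card {z\<in>S. a < z \<and> z < b} = n" unfolding P_def by blast
  define I where "I = {z\<in>S. a < z \<and> z < b}"
  have finI: "finite I" using fin I_def by simp
  have IS: "I \<subseteq> S" using I_def by auto
  have closed: "\<And>x y. x \<in> I \<Longrightarrow> {x,y} \<in> M \<Longrightarrow> y \<in> I"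
  proof -
    fix x y assume x: "x \<in> I" and xy: "{x,y} \<in> M"
    have "a < y \<and> y < b" using inside[OF pm ab(2) ab(1) _ _ xy] x I_def by auto
    moreover have "y \<in> S" using pm_mem[OF pm xy] by simp
    ultimately show "y \<in> I" using I_def by simp
  qed
  have leaves: "\<And>x y. x \<in> I \<Longrightarrow> {x,y} \<in> M \<Longrightarrow> x < y \<Longrightarrow> {z\<in>S. x < z \<and> z < y} = {}"
  proof (rule ccontr)
    fix x y assume x: "x \<in> I" and xy: "{x,y} \<in> M" and xly: "x < y"
      and ne: "{z\<in>S. x < z \<and> z < y} \<noteq> {}"
    have yI: "y \<in> I" using closed x xy by blast
    have sub: "{z\<in>S. x < z \<and> z < y} \<subseteq> I - {x}" using x yI I_def by auto
    have "card {z\<in>S. x < z \<and> z < y} \<le> card (I - {x})" using sub finI by (simp add: card_mono)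
    also have "\<dots> < card I" by (rule card_Diff1_less[OF finI x])
    finally have "card {z\<in>S. x < z \<and> z < y} < n" using cardI I_def by simp
    moreover have "P (card {z\<in>S. x < z \<and> z < y})" unfolding P_def using xy xly ne by blast
    ultimately show False using minn by blast
  qed
  have Ine': "I \<noteq> {}" using Ine I_def by simp
  define c where "c = Min I"
  have cI: "c \<in> I" using c_def finI Ine' by simp
  obtain d where d: "d \<noteq> c" "{c,d} \<in> M" using pm_partner[OF pm] cI IS by blast
  have dI: "d \<in> I" using closed cI d by blast
  have cd: "c < d" using c_def dI d(1) finI by (metis Min_le le_neq_implies_less)
  show ?thesis
  proof (cases "I - {c,d} = {}")
    case False
    show ?thesis
    proof (rule two_leaves[OF pm finI IS closed leaves _ Ine' c_def d(2) False])
      fix z assume "z \<in> S" "Min I \<le> z" "z \<le> Max I"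
      moreover have "a < Min I" using Ine' finI I_def by simp
      moreover have "Max I < b" using Ine' finI I_def by simp
      ultimately show "z \<in> I" using I_def by simp
    qed
  next
    case True
    then have Icd: "I = {c,d}" using cI dI by auto
    have "{x\<in>S. a \<le> x \<and> x \<le> b} = {a,c,d,b}"
    proof -
      have "{x\<in>S. a \<le> x \<and> x \<le> b} = {a,b} \<union> I"
        using pm_mem[OF pm ab(2)] ab(1) I_def by auto
      then show ?thesis using Icd by auto
    qed
    moreover have "a < c" "d < b" using cI dI I_def by auto
    ultimately show ?thesis using cd ab d(2) by blast
  qed
qed



lemma main: "\<forall>S M. finite S \<longrightarrow> card S = 4*m \<longrightarrow> pm S M \<longrightarrow> (\<exists>M'. pm S M' \<and> disjoint_compatible M M')"
proof (induction m)
  case 0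
  show ?case
  proof (intro allI impI)
    fix S :: "nat set" and M assume "finite S" "card S = 4*0" "pm S M"
    then have S0: "S = {}" by simp
    have "M = {}"
    proof (rule ccontr)
      assume "M \<noteq> {}"
      then obtain x where "x \<in> M" by auto
      then have "x \<subseteq> S" "card x = 2" using \<open>pm S M\<close> unfolding pm_def by auto
      then show False using S0 by auto
    qed
    moreover have "pm {} {}" unfolding pm_def by simp
    ultimately show "\<exists>M'. pm S M' \<and> disjoint_compatible M M'"
      using S0 unfolding disjoint_compatible_def by blast
  qed
next
  case (Suc m)
  show ?case
  proof (intro allI impI)
    fix S :: "nat set" and M assume fin: "finite S" and cS: "card S = 4 * Suc m" and pm: "pm S M"
    obtain r1 r2 r3 r4 where o: "r1 < r2" "r2 < r3" "r3 < r4"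
      and blk: "{x\<in>S. r1 \<le> x \<and> x \<le> r4} = {r1,r2,r3,r4}"
      and cs: "({r1,r2} \<in> M \<and> {r3,r4} \<in> M) \<or> ({r1,r4} \<in> M \<and> {r2,r3} \<in> M)"
      using block[OF pm fin] cS by auto
    define R where "R = {r1,r2,r3,r4}"
    have RS: "R \<subseteq> S" using blk R_def by blast
    have cR: "card R = 4" using o R_def by simp
    have cSR: "card (S - R) = 4*m" using cS cR RS fin by (simp add: card_Diff_subset finite_subset)
    have IH: "\<And>M0. pm (S - R) M0 \<Longrightarrow> \<exists>M0'. pm (S - R) M0' \<and> disjoint_compatible M0 M0'"
      using Suc.IH fin cSR by simp
    have blk1: "\<forall>x\<in>S. r1 \<le> x \<and> x \<le> r4 \<longrightarrow> x \<in> R" using blk R_def by blast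
    have blk2: "R \<subseteq> {r1..r4}" using o R_def by auto
    have o2: "r1 < r3" "r1 < r4" "r2 < r4" using o by auto
    from cs show "\<exists>M'. pm S M' \<and> disjoint_compatible M M'"
    proof
      assume h: "{r1,r2} \<in> M \<and> {r3,r4} \<in> M"
      show ?thesis
      proof (rule step[OF pm RS _ _ _ _ _ _ _ _ _ _ _ _ blk1 blk2 _ IH,
            of "{r1,r2}" "{r3,r4}" "{r1,r4}" "{r2,r3}"])
        show "{r1,r2} \<in> M" "{r3,r4} \<in> M" using h by auto
        show "\<forall>u\<in>{{r1, r4}, {r2, r3}}. \<forall>v\<in>{{r1, r2}, {r3, r4}, {r1, r4}, {r2, r3}}. noncrossing u v"
          using o o2 by (simp add: noncrossing_def crosses_iff)
      qed (use o o2 in \<open>auto simp: R_def doubleton_eq_iff\<close>)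
    next
      assume h: "{r1,r4} \<in> M \<and> {r2,r3} \<in> M"
      show ?thesis
      proof (rule step[OF pm RS _ _ _ _ _ _ _ _ _ _ _ _ blk1 blk2 _ IH,
            of "{r1,r4}" "{r2,r3}" "{r1,r2}" "{r3,r4}"])
        show "{r1,r4} \<in> M" "{r2,r3} \<in> M" using h by auto
        show "\<forall>u\<in>{{r1, r2}, {r3, r4}}. \<forall>v\<in>{{r1, r4}, {r2, r3}, {r1, r2}, {r3, r4}}. noncrossing u v"
          using o o2 by (simp add: noncrossing_def crosses_iff)
      qed (use o o2 in \<open>auto simp: R_def doubleton_eq_iff\<close>)
    qed
  qed
qed

lemma is_matching_pm: "is_matching k M = pm {0..<2*k} M"
  by (simp add: is_matching_def pm_def)

theorem mainTheorem10:
  fixes k :: nat and M :: "nat set set"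
  assumes "k \<ge> 1" and "even k" and "is_matching k M"
  shows "\<exists>M'. DCM_adj k M M'"
proof -
  have pmM: "pm {0..<2*k} M" using assms(3) by (simp add: is_matching_pm)
  obtain m where "k = 2*m" using assms(2) by blast
  then have "card {0..<2*k} = 4*m" by simp
  then obtain M' where "pm {0..<2*k} M'" "disjoint_compatible M M'"
    using main[of m] pmM by blast
  then show ?thesis using pmM unfolding DCM_adj_def is_matching_pm by blast
qed


end
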